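(* Let $x=[a_0,a_1,a_2,\ldots]$ and $y=[b_0,b_1,b_2,\ldots]$ be irrational real numbers with convergents $s_k/t_k$ and $s_k'/t_k'$ respectively, and let $k\ge 0$ be such that $a_i\equiv b_i \pmod 4$ for all $0\le i\le k$. Then $\left(\frac{s_k}{t_k}\right)=\left(\frac{s_k'}{t_k'}\right)$, i.e. the Jacobi symbol $\left(\frac{s_k}{t_k}\right)$ depends only on the residue classes of $a_0,a_1,\ldots,a_k$ in $\mathbb{Z}/4\mathbb{Z}$. If moreover $a_0\ge 0$ and $b_0\ge 0$, then also $\left(\frac{t_k}{s_k}\right)=\left(\frac{t_k'}{s_k'}\right)$.
   Context: For $x\in\mathbb{R}\setminus\mathbb{Q}$ with regular continued fraction expansion $x=[a_0,a_1,a_2,\ldots]$ ($a_0\in\mathbb{Z}$, $a_i\ge 1$ for $i\ge1$), the convergents $s_k/t_k$ are defined by $s_{-1}=1$, $s_0=a_0$, $s_k=a_ks_{k-1}+s_{k-2}$ and $t_{-1}=0$, $t_0=1$, $t_k=a_kt_{k-1}+t_{k-2}$ for $k\ge1$; note $\gcd(s_k,t_k)=1$. For an odd natural number $n$ and an integer $m$ coprime to $n$, $\left(\frac{m}{n}\right)$ is the usual Jacobi symbol (equal to $1$ when $n=1$). If $n$ is even (including $n=0$) and $\gcd(m,n)=1$, one sets $\left(\frac{m}{n}\right)=*$, where $*$ is a fixed symbol different from $\pm1$. *)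

theory Defs
  imports Complex_Main "HOL-Number_Theory.Number_Theory"
begin

fun cf_rem :: "real \<Rightarrow> nat \<Rightarrow> real" where
  "cf_rem x 0 = x"
| "cf_rem x (Suc n) = 1 / frac (cf_rem x n)"

definition cf :: "real \<Rightarrow> nat \<Rightarrow> int" where
  "cf x n = \<lfloor>cf_rem x n\<rfloor>"

text \<open>Numerators s_k and denominators t_k of the convergents (k \<ge> 0),
  from s_{-1} = 1, s_0 = a_0, t_{-1} = 0, t_0 = 1.\<close>
fun conv_num :: "(nat \<Rightarrow> int) \<Rightarrow> nat \<Rightarrow> int" where
  "conv_num a 0 = a 0"
| "conv_num a (Suc 0) = a 1 * a 0 + 1"
| "conv_num a (Suc (Suc n)) = a (Suc (Suc n)) * conv_num a (Suc n) + conv_num a n"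

fun conv_den :: "(nat \<Rightarrow> int) \<Rightarrow> nat \<Rightarrow> int" where
  "conv_den a 0 = 1"
| "conv_den a (Suc 0) = a 1"
| "conv_den a (Suc (Suc n)) = a (Suc (Suc n)) * conv_den a (Suc n) + conv_den a n"

text \<open>Jacobi symbol (m/n) for natural n (given as a nonnegative integer);
  None represents the symbol * used when n is even (including n = 0).\<close>
definition jacobi :: "int \<Rightarrow> int \<Rightarrow> int option" where
  "jacobi m n = (if even n then None
     else Some (\<Prod>p\<in>prime_factors n. Legendre m p ^ multiplicity p n))"

end

theory Submission
  imports Defs
begin

definition J :: "int \<Rightarrow> int \<Rightarrow> int" where
  "J m n = (\<Prod>p\<in>prime_factors n. Legendre m p ^ multiplicity p n)"

lemma jacobi_J: "jacobi m n = (if even n then None else Some (J m n))"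
  unfolding jacobi_def J_def by simp

definition eps :: "int \<Rightarrow> int" where "eps w = (if w mod 4 = 1 then 1 else -1)"
definition rho :: "int \<Rightarrow> int \<Rightarrow> int" where
  "rho m n = (if m mod 4 = 3 \<and> n mod 4 = 3 then -1 else 1)"

lemma Legendre_cong:
  assumes "[m = m'] (mod p)"
  shows "Legendre m p = Legendre m' p"
proof -
  have a: "[m = 0] (mod p) \<longleftrightarrow> [m' = 0] (mod p)"
    using assms cong_sym cong_trans by blast
  have b: "QuadRes p m \<longleftrightarrow> QuadRes p m'"
    unfolding QuadRes_def using assms cong_sym cong_trans by blast
  show ?thesis unfolding Legendre_def using a b by simp
qed

lemma Legendre_vals: "Legendre m p \<in> {-1,0,1}"
  unfolding Legendre_def by auto

lemma small_cong_eq: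
  fixes x y p :: int
  assumes "x \<in> {-1,0,1}" "y \<in> {-1,0,1}" "p > 2" "[x = y] (mod p)"
  shows "x = y"
proof -
  have "p dvd (x - y)" using assms(4) by (simp add: cong_iff_dvd_diff cong_sym_eq)
  moreover have "\<bar>x - y\<bar> < p" using assms(1-3) by auto
  ultimately show ?thesis
  proof (cases "x - y = 0")
    case False
    then have "\<bar>p\<bar> \<le> \<bar>x - y\<bar>" using \<open>p dvd (x - y)\<close> dvd_imp_le_int by blast
    with \<open>\<bar>x - y\<bar> < p\<close> show ?thesis by simp
  qed simp
qed

lemma euler_int:
  fixes p a :: int
  assumes "prime p" "p > 2"
  shows "[Legendre a p = a ^ nat ((p - 1) div 2)] (mod p)"
proof -
  have "prime (nat p)" using assms by simp
  moreover have "2 < nat p" using assms by simp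
  ultimately have "[Legendre a (int (nat p)) = a ^ ((nat p - 1) div 2)] (mod int (nat p))"
    by (rule euler_criterion)
  moreover have "int (nat p) = p" using assms by simp
  moreover have "(nat p - 1) div 2 = nat ((p - 1) div 2)" using assms by (simp add: nat_div_distrib nat_diff_distrib)
  ultimately show ?thesis by simp
qed

lemma Legendre_mult:
  assumes "prime p" "p > 2"
  shows "Legendre (m * m') p = Legendre m p * Legendre m' p"
proof -
  let ?e = "nat ((p - 1) div 2)"
  have 1: "[Legendre (m * m') p = (m*m') ^ ?e] (mod p)"
    using euler_int assms by blast
  have 2: "[Legendre m p * Legendre m' p = m ^ ?e * m' ^ ?e] (mod p)"
    using euler_int[OF assms, of m] euler_int[OF assms, of m'] cong_mult by blast
  have "[Legendre (m * m') p = Legendre m p * Legendre m' p] (mod p)"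
    using 1 2 by (metis cong_sym cong_trans power_mult_distrib)
  moreover have "Legendre m p * Legendre m' p \<in> {-1,0,1}"
    using Legendre_vals[of m p] Legendre_vals[of m' p] by auto
  ultimately show ?thesis using small_cong_eq Legendre_vals assms(2) by blast
qed

lemma half_parity:
  fixes p :: int
  assumes "p > 0" "odd p"
  shows "(-1::int) ^ nat ((p - 1) div 2) = eps p"
proof -
  have "p mod 4 = 1 \<or> p mod 4 = 3" using assms by presburger
  then show ?thesis
  proof
    assume h: "p mod 4 = 1"
    have "(p - 1) div 2 = 2 * (p div 4)" using h by presburger
    moreover have "p div 4 \<ge> 0" using assms by simp
    ultimately have "nat ((p - 1) div 2) = 2 * nat (p div 4)" by (simp add: nat_mult_distrib)
    then show ?thesis using h unfolding eps_def by (simp add: power_mult)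
  next
    assume h: "p mod 4 = 3"
    have "(p - 1) div 2 = 2 * (p div 4) + 1" using h by presburger
    moreover have "p div 4 \<ge> 0" using assms by simp
    ultimately have "nat ((p - 1) div 2) = Suc (2 * nat (p div 4))" by (simp add: nat_mult_distrib nat_add_distrib)
    then show ?thesis using h unfolding eps_def by (simp add: power_mult)
  qed
qed

lemma Legendre_minus1:
  assumes "prime p" "p > 2"
  shows "Legendre (-1) p = eps p"
proof -
  have 1: "[Legendre (-1) p = (-1) ^ nat ((p - 1) div 2)] (mod p)"
    using euler_int assms by blast
  have "odd p" using assms prime_odd_int by auto
  then have "(-1::int) ^ nat ((p - 1) div 2) = eps p" using half_parity assms by simp
  with 1 have "[Legendre (-1) p = eps p] (mod p)" by simp
  moreover have "eps p \<in> {-1,0,1}" unfolding eps_def by auto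
  ultimately show ?thesis using small_cong_eq Legendre_vals assms(2) by blast
qed

lemma Legendre_1:
  assumes "p > 1" shows "Legendre 1 p = 1"
proof -
  have "\<not> [1 = 0] (mod p)" using assms by (simp add: cong_0_iff)
  moreover have "QuadRes p 1" unfolding QuadRes_def by (rule exI[of _ 1]) simp
  ultimately show ?thesis unfolding Legendre_def by simp
qed

lemma Legendre_unit: "prime p \<Longrightarrow> \<not> p dvd m \<Longrightarrow> Legendre m p ^ 2 = 1"
  unfolding Legendre_def by (auto simp: cong_0_iff)

lemma QR_rho:
  assumes "prime p" "p > 2" "prime q" "q > 2" "p \<noteq> q"
  shows "Legendre p q * Legendre q p = rho p q"
proof -
  have 1: "Legendre p q * Legendre q p = (-1::int) ^ (nat ((p - 1) div 2 * ((q - 1) div 2)))"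
    using Quadratic_Reciprocity_int[of p q] assms by simp
  have "odd p" "odd q" using assms prime_odd_int by auto
  then have a: "(-1::int) ^ nat ((p - 1) div 2) = eps p" "(-1::int) ^ nat ((q - 1) div 2) = eps q"
    using half_parity assms by auto
  have "nat ((p - 1) div 2 * ((q - 1) div 2)) = nat ((p - 1) div 2) * nat ((q - 1) div 2)"
    using assms by (simp add: nat_mult_distrib)
  then have "(-1::int) ^ (nat ((p - 1) div 2 * ((q - 1) div 2))) = ((-1::int) ^ nat ((p - 1) div 2)) ^ nat ((q - 1) div 2)"
    by (simp add: power_mult)
  also have "\<dots> = (if eps p = 1 then 1 else eps q)"
    using a unfolding eps_def by auto
  also have "\<dots> = rho p q"
  proof -
    have "p mod 4 = 1 \<or> p mod 4 = 3" "q mod 4 = 1 \<or> q mod 4 = 3"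
      using \<open>odd p\<close> \<open>odd q\<close> by presburger+
    then show ?thesis unfolding eps_def rho_def by auto
  qed
  finally show ?thesis using 1 by simp
qed

lemma J_superset:
  assumes "finite S" "\<forall>p\<in>S. prime p" "prime_factors n \<subseteq> S" "n \<noteq> 0"
  shows "J m n = (\<Prod>p\<in>S. Legendre m p ^ multiplicity p n)"
  unfolding J_def
proof (rule prod.mono_neutral_left[OF assms(1) assms(3)])
  show "\<forall>p\<in>S - prime_factors n. Legendre m p ^ multiplicity p n = 1"
    using assms by (auto simp: in_prime_factors_iff not_dvd_imp_multiplicity_0)
qed

lemma J_mult_den:
  assumes "n1 \<noteq> 0" "n2 \<noteq> 0"
  shows "J m (n1 * n2) = J m n1 * J m n2"
proof -
  let ?S = "prime_factors n1 \<union> prime_factors n2"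
  have fin: "finite ?S" by simp
  have pr: "\<forall>p\<in>?S. prime p" by (auto simp: in_prime_factors_iff)
  have "J m (n1 * n2) = (\<Prod>p\<in>?S. Legendre m p ^ multiplicity p (n1 * n2))"
    using J_superset[OF fin pr, of "n1 * n2" m] assms prime_factors_product[OF assms] by simp
  also have "\<dots> = (\<Prod>p\<in>?S. Legendre m p ^ multiplicity p n1 * Legendre m p ^ multiplicity p n2)"
  proof (rule prod.cong)
    fix p assume "p \<in> ?S"
    then have "prime p" using pr by blast
    then have "multiplicity p (n1 * n2) = multiplicity p n1 + multiplicity p n2"
      using prime_elem_multiplicity_mult_distrib assms by blast
    then show "Legendre m p ^ multiplicity p (n1 * n2) = Legendre m p ^ multiplicity p n1 * Legendre m p ^ multiplicity p n2"
      by (simp add: power_add)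
  qed simp
  also have "\<dots> = (\<Prod>p\<in>?S. Legendre m p ^ multiplicity p n1) * (\<Prod>p\<in>?S. Legendre m p ^ multiplicity p n2)"
    by (rule prod.distrib)
  also have "\<dots> = J m n1 * J m n2"
    using J_superset[OF fin pr] assms by simp
  finally show ?thesis .
qed

lemma J_1 [simp]: "J m 1 = 1"
  unfolding J_def by simp

lemma J_prime:
  assumes "prime p" shows "J m p = Legendre m p"
proof -
  have "p \<noteq> 0" "\<not> is_unit p" using prime_ge_2_int[OF assms] by auto
  then show ?thesis unfolding J_def using assms by (simp add: prime_factorization_prime multiplicity_self)
qed

lemma J_cong:
  assumes "[m = m'] (mod n)"
  shows "J m n = J m' n"
  unfolding J_def
proof (rule prod.cong)
  fix p assume "p \<in> prime_factors n"
  then have "p dvd n" by (simp add: in_prime_factors_iff)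
  then have "[m = m'] (mod p)" using assms cong_dvd_modulus by blast
  then show "Legendre m p ^ multiplicity p n = Legendre m' p ^ multiplicity p n"
    using Legendre_cong by simp
qed simp

lemma odd_prime_gt2: "prime (p::int) \<Longrightarrow> p dvd n \<Longrightarrow> odd n \<Longrightarrow> p > 2"
proof -
  assume a: "prime p" "p dvd n" "odd n"
  then have "p \<ge> 2" using prime_ge_2_int by blast
  moreover have "p \<noteq> 2" using a by auto
  ultimately show "p > 2" by simp
qed

lemma J_mult_num:
  assumes "odd n"
  shows "J (m * m') n = J m n * J m' n"
  unfolding J_def
proof -
  have "(\<Prod>p\<in>prime_factors n. Legendre (m * m') p ^ multiplicity p n)
     = (\<Prod>p\<in>prime_factors n. Legendre m p ^ multiplicity p n * Legendre m' p ^ multiplicity p n)"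
  proof (rule prod.cong)
    fix p assume "p \<in> prime_factors n"
    then have "prime p" "p dvd n" by (auto simp: in_prime_factors_iff)
    then have "p > 2" using odd_prime_gt2 assms by blast
    then show "Legendre (m * m') p ^ multiplicity p n = Legendre m p ^ multiplicity p n * Legendre m' p ^ multiplicity p n"
      using Legendre_mult \<open>prime p\<close> by (simp add: power_mult_distrib)
  qed simp
  then show "(\<Prod>p\<in>prime_factors n. Legendre (m * m') p ^ multiplicity p n) =
    (\<Prod>p\<in>prime_factors n. Legendre m p ^ multiplicity p n) * (\<Prod>p\<in>prime_factors n. Legendre m' p ^ multiplicity p n)"
    by (simp add: prod.distrib)
qed

lemma J_sq:
  assumes "coprime m n"
  shows "J m n ^ 2 = 1"
  unfolding J_def
proof -
  have "(\<Prod>p\<in>prime_factors n. Legendre m p ^ multiplicity p n) ^ 2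
     = (\<Prod>p\<in>prime_factors n. (Legendre m p ^ 2) ^ multiplicity p n)"
    by (simp add: prod_power_distrib power_mult[symmetric] mult.commute)
  also have "\<dots> = (\<Prod>p\<in>prime_factors n. 1)"
  proof (rule prod.cong)
    fix p assume "p \<in> prime_factors n"
    then have "prime p" "p dvd n" by (auto simp: in_prime_factors_iff)
    have "\<not> p dvd m"
    proof
      assume "p dvd m"
      then have "is_unit p" using coprime_common_divisor assms \<open>p dvd n\<close> by blast
      then show False using prime_ge_2_int[OF \<open>prime p\<close>] by simp
    qed
    then show "(Legendre m p ^ 2) ^ multiplicity p n = 1"
      using Legendre_unit \<open>prime p\<close> by simp
  qed simp
  finally show "(\<Prod>p\<in>prime_factors n. Legendre m p ^ multiplicity p n) ^ 2 = 1" by simp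
qed

lemma J_1num:
  shows "J 1 n = 1"
  unfolding J_def
  by (rule prod.neutral) (auto simp: in_prime_factors_iff Legendre_1 prime_gt_1_int)

lemma odd_pos_induct [consumes 2, case_names one step]:
  fixes n :: int
  assumes "n > 0" "odd n" "P 1"
    and step: "\<And>p k. prime p \<Longrightarrow> p > 2 \<Longrightarrow> k > 0 \<Longrightarrow> odd k \<Longrightarrow> P k \<Longrightarrow> P (p * k)"
  shows "P n"
  using assms(1,2)
proof (induction "nat n" arbitrary: n rule: less_induct)
  case less
  show ?case
  proof (cases "n = 1")
    case True then show ?thesis using assms(3) by simp
  next
    case False
    then have "\<bar>n\<bar> \<noteq> 1" using less.prems by simp
    then obtain p where p: "prime p" "p dvd n" using prime_factor_int by blast
    then obtain k where k: "n = p * k" by blast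
    have "p > 2" using odd_prime_gt2 p less.prems by blast
    then have "k > 0" using less.prems k by (simp add: zero_less_mult_iff)
    have "odd k" using less.prems k by simp
    have "k < n" using k \<open>p > 2\<close> \<open>k > 0\<close> by (simp add: mult_less_cancel_right1 less_le_trans)
    then have "P k" using less.hyps[of k] \<open>k > 0\<close> \<open>odd k\<close> by simp
    then show ?thesis using step p \<open>p > 2\<close> \<open>k > 0\<close> \<open>odd k\<close> k by blast
  qed
qed

lemma eps_mult: "odd a \<Longrightarrow> odd b \<Longrightarrow> eps (a * b) = eps a * eps b"
proof -
  assume "odd a" "odd b"
  then have "a mod 4 = 1 \<or> a mod 4 = 3" "b mod 4 = 1 \<or> b mod 4 = 3" by presburger+
  moreover have "(a * b) mod 4 = ((a mod 4) * (b mod 4)) mod 4" by (simp add: mod_mult_eq)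
  ultimately show ?thesis unfolding eps_def by auto
qed

lemma rho_mult: "odd a \<Longrightarrow> odd b \<Longrightarrow> rho m (a * b) = rho m a * rho m b"
proof -
  assume "odd a" "odd b"
  then have "a mod 4 = 1 \<or> a mod 4 = 3" "b mod 4 = 1 \<or> b mod 4 = 3" by presburger+
  moreover have "(a * b) mod 4 = ((a mod 4) * (b mod 4)) mod 4" by (simp add: mod_mult_eq)
  ultimately show ?thesis unfolding rho_def by auto
qed

lemma rho_sym: "rho m n = rho n m" unfolding rho_def by auto

lemma J_minus1:
  assumes "n > 0" "odd n"
  shows "J (-1) n = eps n"
  using assms
proof (induction n rule: odd_pos_induct)
  case one then show ?case by (simp add: eps_def)
next
  case (step p k)
  have "J (-1) (p * k) = J (-1) p * J (-1) k" using J_mult_den step by simp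
  also have "\<dots> = eps p * eps k" using step J_prime Legendre_minus1 by simp
  also have "\<dots> = eps (p * k)" using eps_mult step prime_odd_int by simp
  finally show ?case .
qed

lemma J_recip_prime:
  assumes "prime p" "p > 2" "n > 0" "odd n" "coprime p n"
  shows "J p n * J n p = rho p n"
  using assms(3,4,5)
proof (induction n rule: odd_pos_induct)
  case one then show ?case using assms J_1num by (simp add: J_prime rho_def)
next
  case (step q k)
  have cq: "coprime p q" and ck: "coprime p k" using step by auto
  have "p \<noteq> q" using cq assms(1) by auto
  have op: "odd p" using assms prime_odd_int by simp
  have "J p (q * k) * J (q * k) p = (J p q * J q p) * (J p k * J k p)"
    using J_mult_den[of q k p] J_mult_num[OF op, of q k] step by (simp add: algebra_simps)
  also have "\<dots> = rho p q * rho p k"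
    using step ck QR_rho[of p q] assms \<open>p \<noteq> q\<close> J_prime by simp
  also have "\<dots> = rho p (q * k)" using rho_mult step prime_odd_int by simp
  finally show ?case .
qed

lemma J_recip:
  assumes "m > 0" "odd m" "n > 0" "odd n" "coprime m n"
  shows "J m n * J n m = rho m n"
  using assms(1,2,5)
proof (induction m rule: odd_pos_induct)
  case one then show ?case using assms J_1num by (simp add: rho_def)
next
  case (step p k)
  have cp: "coprime p n" and ck: "coprime k n" using step by auto
  have "J (p * k) n * J n (p * k) = (J p n * J n p) * (J k n * J n k)"
    using J_mult_den[of p k n] J_mult_num[OF assms(4), of p k] step by (simp add: algebra_simps)
  also have "\<dots> = rho p n * rho k n"
    using step cp ck J_recip_prime assms by simp
  also have "\<dots> = rho (p * k) n" using rho_mult[of p k n] rho_sym step prime_odd_int by metis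
  finally show ?case .
qed

lemma coprime_kab: "coprime (a::int) (k * a + b) \<longleftrightarrow> coprime a b"
  by (simp add: coprime_iff_gcd_eq_1 gcd_add_mult)

lemma J_flip:
  assumes "m > 0" "odd m" "n > 0" "odd n" "coprime m n"
  shows "J m n = rho m n * J n m"
proof -
  have "J n m ^ 2 = 1" using J_sq assms(5) by (simp add: coprime_commute)
  then have "J m n = J m n * J n m * J n m" by (simp add: power2_eq_square mult.assoc)
  also have "\<dots> = rho m n * J n m" using J_recip assms by simp
  finally show ?thesis .
qed

lemma J_pow: "odd n \<Longrightarrow> J (a ^ j) n = J a n ^ j"
  by (induction j) (simp_all add: J_1num J_mult_num)

lemma odd_mod4: "odd (x::int) \<Longrightarrow> x mod 4 = 1 \<or> x mod 4 = 3" by presburger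
lemma mod4_add2u: "even (u::int) \<Longrightarrow> (x + 2 * u) mod 4 = x mod 4" by presburger

definition sigma :: "int \<Rightarrow> int \<Rightarrow> int" where
  "sigma u w = eps (w + u) * rho w (w + u)"

lemma J_step:
  assumes "u \<ge> 0" "even u" "w > 0" "odd w" "coprime u w"
  shows "J u (w + u) = sigma u w * J u w"
proof -
  have c1: "coprime w (w + u)" using assms(5) by (simp add: coprime_iff_gcd_eq_1 gcd.commute)
  have "[u = -1 * w] (mod (w + u))" by (simp add: cong_iff_dvd_diff add.commute)
  then have "J u (w + u) = J (-1 * w) (w + u)" using J_cong by blast
  also have "\<dots> = J (-1) (w + u) * J w (w + u)" using J_mult_num[of "w + u" "-1" w] assms by simp
  also have "\<dots> = eps (w + u) * (rho w (w + u) * J (w + u) w)"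
    using J_minus1 J_flip[of w "w + u"] assms c1 by simp
  also have "J (w + u) w = J u w"
    by (rule J_cong) (simp add: cong_iff_dvd_diff add.commute)
  finally show ?thesis unfolding sigma_def by simp
qed

lemma sigma_val:
  assumes "even u" "odd w"
  shows "sigma u w = (if u mod 4 = 2 \<and> w mod 4 = 1 then -1 else 1)"
proof -
  have u: "u mod 4 = 0 \<or> u mod 4 = 2" and w: "w mod 4 = 1 \<or> w mod 4 = 3" using assms by presburger+
  have "(w + u) mod 4 = (w mod 4 + u mod 4) mod 4" by (simp add: mod_add_eq)
  then show ?thesis using u w unfolding sigma_def eps_def rho_def by auto
qed

lemma cong4_parity: "[a = b] (mod 4) \<Longrightarrow> even (a::int) \<longleftrightarrow> even b"
  unfolding cong_def by presburger

lemma sigma_cong: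
  assumes "[u = u'] (mod 4)" "[w = w'] (mod 4)"
  shows "sigma u w = sigma u' w'"
proof -
  have "[w + u = w' + u'] (mod 4)" using assms by (simp add: cong_add)
  then show ?thesis using assms unfolding sigma_def eps_def rho_def cong_def by simp
qed

lemma rho_cong:
  assumes "[a = a'] (mod 4)" "[b = b'] (mod 4)"
  shows "rho a b = rho a' b'"
  using assms unfolding rho_def cong_def by simp

lemma eps_cong:
  assumes "[a = a'] (mod 4)"
  shows "eps a = eps a'"
  using assms unfolding eps_def cong_def by simp

lemma J_lin_step:
  assumes "u \<ge> 0" "even u" "v > 0" "odd v" "coprime u v"
  shows "J u ((int c + 1) * u + v) = sigma u (int c * u + v) * J u (int c * u + v)"
proof -
  have "int c * u + v > 0" using assms by (simp add: add_nonneg_pos)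
  moreover have "odd (int c * u + v)" using assms by simp
  moreover have "coprime u (int c * u + v)" using assms coprime_kab by simp
  ultimately have "J u (int c * u + v + u) = sigma u (int c * u + v) * J u (int c * u + v)"
    using J_step assms by blast
  moreover have "int c * u + v + u = (int c + 1) * u + v" by (simp add: algebra_simps)
  ultimately show ?thesis by simp
qed

lemma J_period4:
  assumes "u \<ge> 0" "even u" "v > 0" "odd v" "coprime u v"
  shows "J u ((int c + 4) * u + v) = J u (int c * u + v)"
proof -
  let ?w = "\<lambda>j::nat. int (c + j) * u + v"
  have st: "J u (?w (Suc j)) = sigma u (?w j) * J u (?w j)" for j
    using J_lin_step[OF assms, of "c + j"] by (simp add: algebra_simps)
  have odd: "odd (?w j)" for j using assms by simp
  have "J u (?w 4) = sigma u (?w 3) * sigma u (?w 2) * sigma u (?w 1) * sigma u (?w 0) * J u (?w 0)"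
    using st[of 3] st[of 2] st[of 1] st[of 0] by (simp add: numeral_eq_Suc mult.assoc)
  moreover have "sigma u (?w 3) * sigma u (?w 2) * sigma u (?w 1) * sigma u (?w 0) = 1"
  proof -
    have u: "u mod 4 = 0 \<or> u mod 4 = 2" using assms by presburger
    have w: "?w 0 mod 4 = 1 \<or> ?w 0 mod 4 = 3" using odd_mod4 odd[of 0] by blast
    have e: "?w j = ?w 0 + int j * u" for j by (simp add: algebra_simps)
    have m1: "?w 1 mod 4 = (?w 0 mod 4 + u mod 4) mod 4" using e[of 1] by (simp add: mod_add_eq add.commute add.left_commute)
    have m2: "?w 2 mod 4 = ?w 0 mod 4" using e[of 2] mod4_add2u[OF assms(2), of "?w 0"] by (simp add: add.commute add.left_commute)
    have m3: "?w 3 mod 4 = (?w 0 mod 4 + u mod 4) mod 4"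
    proof -
      have "?w 3 = ?w 1 + 2 * u" using e[of 3] e[of 1] by simp
      then have "?w 3 mod 4 = ?w 1 mod 4" using mod4_add2u[OF assms(2), of "?w 1"] by (simp add: add.commute add.left_commute)
      then show ?thesis using m1 by simp
    qed
    have s: "sigma u (?w k) = (if u mod 4 = 2 \<and> ?w k mod 4 = 1 then -1 else 1)" for k
      using sigma_val[OF assms(2) odd[of k]] .
    show ?thesis
    proof (cases "u mod 4 = 2")
      case False
      then show ?thesis unfolding s[of 0] s[of 1] s[of 2] s[of 3] by simp
    next
      case True
      show ?thesis
      proof (cases "?w 0 mod 4 = 1")
        case T: True
        then have "?w 1 mod 4 = 3" "?w 2 mod 4 = 1" "?w 3 mod 4 = 3" using m1 m2 m3 True by simp_all
        then show ?thesis unfolding s[of 0] s[of 1] s[of 2] s[of 3] using T True by simp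
      next
        case F: False
        then have "?w 0 mod 4 = 3" using w by simp
        then have "?w 1 mod 4 = 1" "?w 2 mod 4 = 3" "?w 3 mod 4 = 1" using m1 m2 m3 True by simp_all
        then show ?thesis unfolding s[of 0] s[of 1] s[of 2] s[of 3] using \<open>?w 0 mod 4 = 3\<close> True by simp
      qed
    qed
  qed
  ultimately show ?thesis by (simp add: algebra_simps)
qed

lemma J_period4_q:
  assumes "u \<ge> 0" "even u" "v > 0" "odd v" "coprime u v"
  shows "J u ((int r + 4 * int q) * u + v) = J u (int r * u + v)"
proof (induction q)
  case (Suc q)
  have "J u ((int r + 4 * int (Suc q)) * u + v) = J u ((int (r + 4 * q) + 4) * u + v)"
    by (simp add: algebra_simps)
  also have "\<dots> = J u (int (r + 4 * q) * u + v)" using J_period4[OF assms] by blast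
  also have "\<dots> = J u (int r * u + v)" using Suc by (simp add: algebra_simps)
  finally show ?case .
qed simp

lemma J_mod4_red:
  assumes "u \<ge> 0" "even u" "v > 0" "odd v" "coprime u v"
  shows "J u (int c * u + v) = J u (int (c mod 4) * u + v)"
proof -
  have "c = c mod 4 + 4 * (c div 4)" by simp
  then have "int c = int (c mod 4) + 4 * int (c div 4)" by linarith
  then show ?thesis using J_period4_q[OF assms, of "c mod 4" "c div 4"] by simp
qed

lemma IR:
  assumes "u \<ge> 0" "even u" "v > 0" "odd v" "coprime u v"
    and "u' \<ge> 0" "even u'" "v' > 0" "odd v'" "coprime u' v'"
    and "[u = u'] (mod 4)" "[v = v'] (mod 4)" "J u v = J u' v'"
  shows "J u (int c * u + v) = J u' (int c * u' + v')"
proof (induction c)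
  case 0 then show ?case using assms by simp
next
  case (Suc c)
  have "[int c * u + v = int c * u' + v'] (mod 4)"
    using assms by (intro cong_add cong_mult cong_refl) auto
  then have "sigma u (int c * u + v) = sigma u' (int c * u' + v')"
    using sigma_cong assms by blast
  then show ?case
    using J_lin_step[OF assms(1-5), of c] J_lin_step[OF assms(6-10), of c] Suc
    by (simp add: add.commute)
qed

lemma IR':
  assumes "u \<ge> 0" "even u" "v > 0" "odd v" "coprime u v"
    and "u' \<ge> 0" "even u'" "v' > 0" "odd v'" "coprime u' v'"
    and "[u = u'] (mod 4)" "[v = v'] (mod 4)" "J u v = J u' v'"
    and "c mod 4 = c' mod 4"
  shows "J u (int c * u + v) = J u' (int c' * u' + v')"
  using J_mod4_red[OF assms(1-5), of c] J_mod4_red[OF assms(6-10), of c'] IR[OF assms(1-13), of "c mod 4"]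
    assms(14) by simp

fun U :: "(nat \<Rightarrow> int) \<Rightarrow> int \<Rightarrow> int \<Rightarrow> nat \<Rightarrow> int" where
  "U c a b 0 = a"
| "U c a b (Suc 0) = b"
| "U c a b (Suc (Suc n)) = c (Suc n) * U c a b (Suc n) + U c a b n"

lemma U_nonneg:
  assumes "\<forall>i\<ge>1. c i \<ge> 0" "a \<ge> 0" "b \<ge> 0"
  shows "U c a b n \<ge> 0 \<and> U c a b (Suc n) \<ge> 0"
proof (induction n)
  case 0 then show ?case using assms by simp
next
  case (Suc n)
  then show ?case using assms(1) by simp
qed

lemma U_coprime:
  assumes "coprime a b"
  shows "coprime (U c a b n) (U c a b (Suc n))"
proof (induction n)
  case 0 then show ?case using assms by simp
next
  case (Suc n)
  then show ?case by (simp add: coprime_kab coprime_commute)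
qed

lemma U_det:
  "U c a b (Suc n) * U c a' b' n - U c a b n * U c a' b' (Suc n) = (-1) ^ n * (b * a' - a * b')"
proof (induction n)
  case 0 then show ?case by simp
next
  case (Suc n)
  have "U c a b (Suc (Suc n)) * U c a' b' (Suc n) - U c a b (Suc n) * U c a' b' (Suc (Suc n))
      = - (U c a b (Suc n) * U c a' b' n - U c a b n * U c a' b' (Suc n))"
    by (simp add: algebra_simps)
  then show ?case using Suc by simp
qed

lemma even_coprime_odd: "even (B::int) \<Longrightarrow> coprime B A \<Longrightarrow> odd A"
proof (rule ccontr)
  assume h: "even B" "coprime B A" "\<not> odd A"
  then have "is_unit (2::int)" using coprime_common_divisor[of B A 2] by simp
  then show False by simp
qed

lemma core:
  fixes c c' :: "nat \<Rightarrow> int"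
  assumes c0: "\<forall>i\<ge>1. c i \<ge> 0" and c0': "\<forall>i\<ge>1. c' i \<ge> 0"
    and ab: "a \<ge> 0" "b \<ge> 0" "a' \<ge> 0" "b' \<ge> 0"
    and cop: "coprime a b" "coprime a' b'"
    and m4: "[a = a'] (mod 4)" "[b = b'] (mod 4)"
    and j0: "jacobi a b = jacobi a' b'" "jacobi b a = jacobi b' a'"
    and cc: "\<forall>i. 1 \<le> i \<longrightarrow> i \<le> N \<longrightarrow> [c i = c' i] (mod 4)"
  shows "n \<le> N \<Longrightarrow> [U c a b n = U c' a' b' n] (mod 4) \<and> [U c a b (Suc n) = U c' a' b' (Suc n)] (mod 4)
     \<and> jacobi (U c a b n) (U c a b (Suc n)) = jacobi (U c' a' b' n) (U c' a' b' (Suc n))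
     \<and> jacobi (U c a b (Suc n)) (U c a b n) = jacobi (U c' a' b' (Suc n)) (U c' a' b' n)"
proof (induction n)
  case 0 then show ?case using m4 j0 by simp
next
  case (Suc n)
  define A where "A = U c a b n"
  define B where "B = U c a b (Suc n)"
  define C where "C = U c a b (Suc (Suc n))"
  define A' where "A' = U c' a' b' n"
  define B' where "B' = U c' a' b' (Suc n)"
  define C' where "C' = U c' a' b' (Suc (Suc n))"
  define k where "k = c (Suc n)"
  define k' where "k' = c' (Suc n)"
  have IH: "[A = A'] (mod 4)" "[B = B'] (mod 4)" "jacobi A B = jacobi A' B'" "jacobi B A = jacobi B' A'"
    using Suc unfolding A_def B_def A'_def B'_def by auto
  have Cdef: "C = k * B + A" "C' = k' * B' + A'" unfolding C_def k_def B_def A_def C'_def k'_def B'_def A'_def by simp_all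
  have kk: "[k = k'] (mod 4)" "k \<ge> 0" "k' \<ge> 0" using cc c0 c0' Suc.prems unfolding k_def k'_def by auto
  have nn: "A \<ge> 0" "B \<ge> 0" "C \<ge> 0" "A' \<ge> 0" "B' \<ge> 0" "C' \<ge> 0"
    using U_nonneg[OF c0 ab(1,2), of n] U_nonneg[OF c0 ab(1,2), of "Suc n"]
      U_nonneg[OF c0' ab(3,4), of n] U_nonneg[OF c0' ab(3,4), of "Suc n"]
    unfolding A_def B_def C_def A'_def B'_def C'_def by auto
  have cp: "coprime A B" "coprime B C" "coprime A' B'" "coprime B' C'"
    using U_coprime[OF cop(1), of c n] U_coprime[OF cop(1), of c "Suc n"]
      U_coprime[OF cop(2), of c' n] U_coprime[OF cop(2), of c' "Suc n"]
    unfolding A_def B_def C_def A'_def B'_def C'_def by auto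
  have mC: "[C = C'] (mod 4)" unfolding Cdef using IH kk by (intro cong_add cong_mult) auto
  have parB: "even B \<longleftrightarrow> even B'" using IH(2) cong4_parity by blast
  have parC: "even C \<longleftrightarrow> even C'" using mC cong4_parity by blast
  have j1: "jacobi C B = jacobi C' B'"
  proof (cases "even B")
    case True then show ?thesis using parB by (simp add: jacobi_J)
  next
    case False
    have "J C B = J A B" by (rule J_cong) (simp add: Cdef cong_iff_dvd_diff)
    moreover have "J C' B' = J A' B'" by (rule J_cong) (simp add: Cdef cong_iff_dvd_diff)
    moreover have "J A B = J A' B'" using IH(3) False parB by (simp add: jacobi_J)
    ultimately show ?thesis using False parB by (simp add: jacobi_J)
  qed
  have j2: "jacobi B C = jacobi B' C'"
  proof (cases "even C")
    case True then show ?thesis using parC by (simp add: jacobi_J)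
  next
    case oddC: False
    then have oddC': "odd C'" using parC by simp
    have Cpos: "C > 0" "C' > 0" using nn oddC oddC' by (auto simp: order_le_less)
    show ?thesis
    proof (cases "even B")
      case False
      then have oddB': "odd B'" using parB by simp
      have Bpos: "B > 0" "B' > 0" using nn False oddB' by (auto simp: order_le_less)
      have "J B C = rho B C * J C B" using J_flip Bpos Cpos False oddC cp by blast
      moreover have "J B' C' = rho B' C' * J C' B'" using J_flip Bpos Cpos oddB' oddC' cp by blast
      moreover have "rho B C = rho B' C'" using rho_cong IH(2) mC by blast
      moreover have "J C B = J C' B'" using j1 False oddB' by (simp add: jacobi_J)
      ultimately show ?thesis using oddC oddC' by (simp add: jacobi_J)
    next
      case True
      then have evB': "even B'" using parB by simp
      have oA: "odd A" "odd A'" using even_coprime_odd True evB' cp by (auto simp: coprime_commute)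
      have Apos: "A > 0" "A' > 0" using nn oA by (auto simp: order_le_less)
      have JBA: "J B A = J B' A'" using IH(4) oA by (simp add: jacobi_J)
      have km: "nat k mod 4 = nat k' mod 4"
      proof -
        have "k mod 4 = k' mod 4" using kk(1) unfolding cong_def .
        then have "nat (k mod 4) = nat (k' mod 4)" by simp
        then show ?thesis using kk(2,3) nat_mod_distrib[of k 4] nat_mod_distrib[of k' 4] by simp
      qed
      have "J B (int (nat k) * B + A) = J B' (int (nat k') * B' + A')"
        by (rule IR') (use nn True evB' Apos oA cp IH JBA km in \<open>auto simp: coprime_commute\<close>)
      then have "J B C = J B' C'" using kk Cdef by simp
      then show ?thesis using oddC oddC' by (simp add: jacobi_J)
    qed
  qed
  show ?case using IH(2) mC j1 j2 unfolding A_def B_def C_def A'_def B'_def C'_def by simp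
qed

lemma cf_rem_irr: "x \<notin> \<rat> \<Longrightarrow> cf_rem x n \<notin> \<rat>"
proof (induction n)
  case 0 then show ?case by simp
next
  case (Suc n)
  let ?r = "cf_rem x n"
  show ?case
  proof
    assume "cf_rem x (Suc n) \<in> \<rat>"
    then have "1 / frac ?r \<in> \<rat>" by simp
    then have "1 / (1 / frac ?r) \<in> \<rat>" by (rule Rats_divide[OF Rats_1])
    then have "frac ?r \<in> \<rat>" by simp
    then have "frac ?r + of_int \<lfloor>?r\<rfloor> \<in> \<rat>" by (intro Rats_add) auto
    then have "?r \<in> \<rat>" by (simp add: frac_def)
    then show False using Suc by simp
  qed
qed

lemma cf_pos:
  assumes "x \<notin> \<rat>" "i \<ge> 1"
  shows "cf x i \<ge> 1"
proof -
  obtain n where n: "i = Suc n" using assms(2) by (cases i) auto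
  let ?r = "cf_rem x n"
  have "?r \<notin> \<rat>" using cf_rem_irr assms by blast
  then have "?r \<notin> \<int>" using Ints_subset_Rats by blast
  then have "frac ?r \<noteq> 0" by (simp add: frac_eq_0_iff)
  then have "0 < frac ?r" "frac ?r < 1" using frac_ge_0[of ?r] frac_lt_1[of ?r] by auto
  then have "1 / frac ?r \<ge> 1" by simp
  then have "\<lfloor>1 / frac ?r\<rfloor> \<ge> 1" by simp
  then show ?thesis unfolding cf_def n by simp
qed

lemma conv_den_U: "conv_den a k = U a 0 1 (Suc k)"
  by (induction a k rule: conv_den.induct) simp_all

lemma conv_num_U: "conv_num a k = U a 1 (a 0) (Suc k)"
  by (induction a k rule: conv_num.induct) simp_all

lemma part1_formula:
  assumes c0: "\<forall>i\<ge>1. c i \<ge> 0" and od: "odd (U c 0 1 (Suc k))"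
  shows "J (U c 1 (c 0) (Suc k)) (U c 0 1 (Suc k)) = eps (U c 0 1 (Suc k)) ^ Suc k * J (U c 0 1 k) (U c 0 1 (Suc k))"
proof -
  define T where "T = U c 0 1 (Suc k)"
  define t where "t = U c 0 1 k"
  define S where "S = U c 1 (c 0) (Suc k)"
  define s where "s = U c 1 (c 0) k"
  have det: "S * t - s * T = (-1) ^ Suc k"
    using U_det[of c 1 "c 0" k 0 1] unfolding S_def t_def s_def T_def by simp
  have Tpos: "T > 0" using U_nonneg[OF c0, of 0 1 k] od unfolding T_def by (auto simp: order_le_less)
  have oT: "odd T" using od T_def by simp
  have cp: "coprime t T" using U_coprime[of 0 1 c k] unfolding t_def T_def by simp
  have "[S * t = (-1) ^ Suc k] (mod T)"
    unfolding cong_iff_dvd_diff using det by (metis dvd_triv_right diff_eq_eq add_diff_cancel_left')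
  then have "J (S * t) T = J ((-1) ^ Suc k) T" using J_cong by blast
  also have "\<dots> = eps T ^ Suc k" by (simp only: J_pow[OF oT] J_minus1[OF Tpos oT])
  finally have 1: "J S T * J t T = eps T ^ Suc k" using J_mult_num[OF oT] by simp
  have "J t T ^ 2 = 1" using J_sq cp by blast
  then have "J S T = J S T * J t T * J t T" by (simp add: power2_eq_square mult.assoc)
  then have "J S T = eps T ^ Suc k * J t T" using 1 by simp
  then show ?thesis unfolding S_def T_def t_def by simp
qed

lemma part2_formula:
  assumes c0: "\<forall>i\<ge>1. c i \<ge> 0" "c 0 \<ge> 0" and od: "odd (U c 1 (c 0) (Suc k))"
  shows "J (U c 0 1 (Suc k)) (U c 1 (c 0) (Suc k)) = eps (U c 1 (c 0) (Suc k)) ^ Suc (Suc k) * J (U c 1 (c 0) k) (U c 1 (c 0) (Suc k))"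
proof -
  define T where "T = U c 0 1 (Suc k)"
  define t where "t = U c 0 1 k"
  define S where "S = U c 1 (c 0) (Suc k)"
  define s where "s = U c 1 (c 0) k"
  have det: "S * t - s * T = (-1) ^ Suc k"
    using U_det[of c 1 "c 0" k 0 1] unfolding S_def t_def s_def T_def by simp
  have det2: "T * s - t * S = (-1) ^ Suc (Suc k)" using det by (simp add: algebra_simps)
  have Spos: "S > 0" using U_nonneg[OF c0(1), of 1 "c 0" k] c0(2) od unfolding S_def by (auto simp: order_le_less)
  have oS: "odd S" using od S_def by simp
  have cp: "coprime s S" using U_coprime[of 1 "c 0" c k] unfolding s_def S_def by simp
  have "[T * s = (-1) ^ Suc (Suc k)] (mod S)"
    unfolding cong_iff_dvd_diff using det2 by (metis dvd_triv_right diff_eq_eq add_diff_cancel_left')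
  then have "J (T * s) S = J ((-1) ^ Suc (Suc k)) S" using J_cong by blast
  also have "\<dots> = eps S ^ Suc (Suc k)" by (simp only: J_pow[OF oS] J_minus1[OF Spos oS])
  finally have 1: "J T S * J s S = eps S ^ Suc (Suc k)" using J_mult_num[OF oS] by simp
  have "J s S ^ 2 = 1" using J_sq cp by blast
  then have "J T S = J T S * J s S * J s S" by (simp add: power2_eq_square mult.assoc)
  then have "J T S = eps S ^ Suc (Suc k) * J s S" using 1 by simp
  then show ?thesis unfolding S_def T_def s_def by simp
qed

theorem theorem2:
  fixes x y :: real and k :: nat
  assumes "x \<notin> \<rat>" and "y \<notin> \<rat>"
    and "\<forall>i\<le>k. [cf x i = cf y i] (mod 4)"
  shows "jacobi (conv_num (cf x) k) (conv_den (cf x) k)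
           = jacobi (conv_num (cf y) k) (conv_den (cf y) k)
       \<and> (cf x 0 \<ge> 0 \<and> cf y 0 \<ge> 0 \<longrightarrow>
         jacobi (conv_den (cf x) k) (conv_num (cf x) k)
           = jacobi (conv_den (cf y) k) (conv_num (cf y) k))"
proof -
  define c where "c = cf x"
  define c' where "c' = cf y"
  have c0: "\<forall>i\<ge>1. c i \<ge> 0" "\<forall>i\<ge>1. c' i \<ge> 0"
    using cf_pos assms unfolding c_def c'_def by (auto intro: order_trans[OF zero_le_one])
  have cc: "\<forall>i. 1 \<le> i \<longrightarrow> i \<le> k \<longrightarrow> [c i = c' i] (mod 4)" using assms(3) unfolding c_def c'_def by simp
  have P1: "jacobi (U c 1 (c 0) (Suc k)) (U c 0 1 (Suc k)) = jacobi (U c' 1 (c' 0) (Suc k)) (U c' 0 1 (Suc k))"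
  proof -
    have core1: "[U c 0 1 (Suc k) = U c' 0 1 (Suc k)] (mod 4)
       \<and> jacobi (U c 0 1 k) (U c 0 1 (Suc k)) = jacobi (U c' 0 1 k) (U c' 0 1 (Suc k))"
      using core[OF c0(1) c0(2), of 0 1 0 1 k k] cc by simp
    have par: "even (U c 0 1 (Suc k)) \<longleftrightarrow> even (U c' 0 1 (Suc k))" using core1 cong4_parity by blast
    show ?thesis
    proof (cases "even (U c 0 1 (Suc k))")
      case True then show ?thesis using par by (simp add: jacobi_J)
    next
      case False
      then have o': "odd (U c' 0 1 (Suc k))" using par by simp
      have "eps (U c 0 1 (Suc k)) = eps (U c' 0 1 (Suc k))" using core1 eps_cong by blast
      moreover have "J (U c 0 1 k) (U c 0 1 (Suc k)) = J (U c' 0 1 k) (U c' 0 1 (Suc k))"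
        using core1 False o' by (simp add: jacobi_J)
      ultimately show ?thesis
        using part1_formula[OF c0(1) False] part1_formula[OF c0(2) o'] False o' by (simp add: jacobi_J)
    qed
  qed
  have P2: "c 0 \<ge> 0 \<Longrightarrow> c' 0 \<ge> 0 \<Longrightarrow>
    jacobi (U c 0 1 (Suc k)) (U c 1 (c 0) (Suc k)) = jacobi (U c' 0 1 (Suc k)) (U c' 1 (c' 0) (Suc k))"
  proof -
    assume a0: "c 0 \<ge> 0" "c' 0 \<ge> 0"
    have m0: "[c 0 = c' 0] (mod 4)" using assms(3) unfolding c_def c'_def by simp
    have p0: "even (c 0) \<longleftrightarrow> even (c' 0)" using m0 cong4_parity by blast
    have j01: "jacobi 1 (c 0) = jacobi 1 (c' 0)" using p0 by (simp add: jacobi_J J_1num)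
    have j02: "jacobi (c 0) 1 = jacobi (c' 0) 1" by (simp add: jacobi_J)
    have core2: "[U c 1 (c 0) (Suc k) = U c' 1 (c' 0) (Suc k)] (mod 4)
       \<and> jacobi (U c 1 (c 0) k) (U c 1 (c 0) (Suc k)) = jacobi (U c' 1 (c' 0) k) (U c' 1 (c' 0) (Suc k))"
      using core[OF c0(1) c0(2), of 1 "c 0" 1 "c' 0" k k] cc a0 m0 j01 j02 by simp
    have par: "even (U c 1 (c 0) (Suc k)) \<longleftrightarrow> even (U c' 1 (c' 0) (Suc k))" using core2 cong4_parity by blast
    show ?thesis
    proof (cases "even (U c 1 (c 0) (Suc k))")
      case True then show ?thesis using par by (simp add: jacobi_J)
    next
      case False
      then have o': "odd (U c' 1 (c' 0) (Suc k))" using par by simp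
      have "eps (U c 1 (c 0) (Suc k)) = eps (U c' 1 (c' 0) (Suc k))" using core2 eps_cong by blast
      moreover have "J (U c 1 (c 0) k) (U c 1 (c 0) (Suc k)) = J (U c' 1 (c' 0) k) (U c' 1 (c' 0) (Suc k))"
        using core2 False o' by (simp add: jacobi_J)
      ultimately show ?thesis
        using part2_formula[OF c0(1) a0(1) False] part2_formula[OF c0(2) a0(2) o'] False o' by (simp add: jacobi_J)
    qed
  qed
  show ?thesis using P1 P2 unfolding conv_num_U conv_den_U c_def c'_def by simp
qed

end
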